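(* Assume that $\mathsf U_k^n\in\mathcal B(b)$ for every $k\in\mathcal V$. Let $i\in\mathcal V$, $j\in\mathcal I(i)$, and let $\gamma_{ij}\in[1,\min(\gamma_i^n,\gamma_j^n)]$. Define, for $\mathbf u\in\mathcal B(b)$, $$\Psi_{ij}(\mathbf u):=\rho e(\mathbf u)-S_{ij}^{\min}\,\rho^{\gamma_{ij}}(1-b\rho)^{1-\gamma_{ij}},\qquad S_{ij}^{\min}:=\min\big(S(\mathsf U_i^n,\gamma_{ij}),S(\mathsf U_j^n,\gamma_{ij})\big).$$ Consider the extended Riemann problem with left data $(\varrho_i^n,\mathsf M_i^n\cdot\mathbf n_{ij},\mathcal E_i^n,\Gamma_i^n)^{\mathsf T}$ and right data $(\varrho_j^n,\mathsf M_j^n\cdot\mathbf n_{ij},\mathcal E_j^n,\Gamma_j^n)^{\mathsf T}$. Then $\Psi_{ij}$ (evaluated on the states of the Riemann solution) increases across shocks in the solution of this extended Riemann problem, if a shock wave exists, i.e. from the pre-shock state to the post-shock state.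
   Context: Let $d\ge1$ and $b\ge0$. For $\mathbf u=(\rho,\mathbf m,E)\in\mathbb R^{d+2}$ with $\rho>0$ set $e(\mathbf u)=\rho^{-1}E-\tfrac12\|\mathbf m/\rho\|^2$. The admissible set is $\mathcal B(b)=\{\mathbf u=(\rho,\mathbf m,E): \rho>0,\ 1-b\rho>0,\ e(\mathbf u)>0\}$. A pressure "oracle" $p:\mathcal B(b)\to[0,\infty)$ is an arbitrary given function. $\mathcal V$ is a finite index set; for each $i\in\mathcal V$, $\mathcal I(i)\subset\mathcal V$ is a set containing $i$, and vectors $\mathbf c_{ij}\in\mathbb R^d$ (nonzero for $j\ne i$) are given with $\mathbf n_{ij}:=\mathbf c_{ij}/\|\mathbf c_{ij}\|$. States $\mathsf U_k^n=(\varrho_k^n,\mathsf M_k^n,\mathsf E_k^n)$ are given. For $Z\in\{i,j\}$: $\mathsf p_Z^n=p(\mathsf U_Z^n)$, $\mathsf e_Z^n=e(\mathsf U_Z^n)$, $\gamma_Z^n:=1+\frac{\mathsf p_Z^n(1-b\varrho_Z^n)}{\varrho_Z^n\mathsf e_Z^n}$, $\Gamma_Z^n:=\varrho_Z^n\gamma_Z^n$, and $\mathcal E_Z^n:=\mathsf E_Z^n-\frac{\|\mathsf M_Z^n-(\mathsf M_Z^n\cdot\mathbf n_{ij})\mathbf n_{ij}\|^2}{2\varrho_Z^n}$. For $\mathbf u\in\mathcal B(b)$ and $\gamma\ge1$, $S(\mathbf u,\gamma):=\frac{\rho e(\mathbf u)}{\rho^\gamma}(1-b\rho)^{\gamma-1}$.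 The extended Riemann problem is the one-dimensional system in $(x,t)$ $$\partial_t(\rho,m,\mathcal E,\Gamma)^{\mathsf T}+\partial_x\Big(m,\ \tfrac{m^2}{\rho}+p_{\rm cov},\ \tfrac m\rho(\mathcal E+p_{\rm cov}),\ \tfrac m\rho\Gamma\Big)^{\mathsf T}=0,\qquad p_{\rm cov}=\frac{\Gamma/\rho-1}{1-b\rho}\Big(\mathcal E-\frac{m^2}{2\rho}\Big),$$ with the left data for $x<0$ and right data for $x>0$ at $t=0$. A state $(\rho,m,\mathcal E,\Gamma)$ of this problem is identified with a state having density $\rho$ and internal energy density $\rho e=\mathcal E-\frac{m^2}{2\rho}$ when evaluating $\Psi_{ij}$. *)

theory Defs
  imports "HOL-Analysis.Analysis"
begin

definition int_en :: "real \<Rightarrow> 'a::real_normed_vector \<Rightarrow> real \<Rightarrow> real" where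
  "int_en rho m E = E / rho - (norm ((1 / rho) *\<^sub>R m))\<^sup>2 / 2"

definition admissible :: "real \<Rightarrow> real \<Rightarrow> 'a::real_normed_vector \<Rightarrow> real \<Rightarrow> bool" where
  "admissible b rho m E \<longleftrightarrow> rho > 0 \<and> 1 - b * rho > 0 \<and> int_en rho m E > 0"

definition S_fun :: "real \<Rightarrow> real \<Rightarrow> 'a::real_normed_vector \<Rightarrow> real \<Rightarrow> real \<Rightarrow> real" where
  "S_fun b rho m E g = rho * int_en rho m E / rho powr g * (1 - b * rho) powr (g - 1)"

definition Psi :: "real \<Rightarrow> real \<Rightarrow> real \<Rightarrow> real \<Rightarrow> 'a::real_normed_vector \<Rightarrow> real \<Rightarrow> real" where
  "Psi b Smin g rho m E = rho * int_en rho m E - Smin * rho powr g * (1 - b * rho) powr (1 - g)"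

definition gamma_of :: "real \<Rightarrow> real \<Rightarrow> real \<Rightarrow> 'a::real_normed_vector \<Rightarrow> real \<Rightarrow> real" where
  "gamma_of b pr rho m E = 1 + pr * (1 - b * rho) / (rho * int_en rho m E)"

definition unit_dir :: "real^'d \<Rightarrow> real^'d" where
  "unit_dir c = (1 / norm c) *\<^sub>R c"

text \<open>Energy with the tangential kinetic energy removed: E - |M - (M.n)n|^2/(2 rho).\<close>
definition E_normal :: "real^'d \<Rightarrow> real \<Rightarrow> real^'d \<Rightarrow> real \<Rightarrow> real" where
  "E_normal n rho M E = E - (norm (M - (M \<bullet> n) *\<^sub>R n))\<^sup>2 / (2 * rho)"

text \<open>Extended Riemann problem: states (rho, m, calE, Gamma).\<close>
type_synonym ext_state = "real \<times> real \<times> real \<times> real"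

definition p_cov :: "real \<Rightarrow> ext_state \<Rightarrow> real" where
  "p_cov b U = (case U of (rho, m, cE, G) \<Rightarrow>
     (G / rho - 1) / (1 - b * rho) * (cE - m\<^sup>2 / (2 * rho)))"

definition ext_flux :: "real \<Rightarrow> ext_state \<Rightarrow> ext_state" where
  "ext_flux b U = (case U of (rho, m, cE, G) \<Rightarrow>
     (m, m\<^sup>2 / rho + p_cov b U, m / rho * (cE + p_cov b U), m / rho * G))"

definition RH :: "real \<Rightarrow> real \<Rightarrow> ext_state \<Rightarrow> ext_state \<Rightarrow> bool" where
  "RH b s UL UR \<longleftrightarrow>
     (case UL of (r1, m1, e1, g1) \<Rightarrow> case UR of (r2, m2, e2, g2) \<Rightarrow>
      case ext_flux b UL of (f1, f2, f3, f4) \<Rightarrow> case ext_flux b UR of (h1, h2, h3, h4) \<Rightarrow>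
        s * (r2 - r1) = h1 - f1 \<and> s * (m2 - m1) = h2 - f2 \<and>
        s * (e2 - e1) = h3 - f3 \<and> s * (g2 - g1) = h4 - f4)"

text \<open>Velocity and sound speed of the extended system (gamma = Gamma/rho):
  c^2 = gamma p_cov / (rho (1 - b rho)). Eigenvalues v - c, v, v, v + c.\<close>
definition vel :: "ext_state \<Rightarrow> real" where
  "vel U = (case U of (rho, m, cE, G) \<Rightarrow> m / rho)"

definition snd_speed :: "real \<Rightarrow> ext_state \<Rightarrow> real" where
  "snd_speed b U = (case U of (rho, m, cE, G) \<Rightarrow>
     sqrt ((G / rho) * p_cov b U / (rho * (1 - b * rho))))"

definition lam1 :: "real \<Rightarrow> ext_state \<Rightarrow> real" where
  "lam1 b U = vel U - snd_speed b U"

definition lam3 :: "real \<Rightarrow> ext_state \<Rightarrow> real" where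
  "lam3 b U = vel U + snd_speed b U"

definition lax1 :: "real \<Rightarrow> real \<Rightarrow> ext_state \<Rightarrow> ext_state \<Rightarrow> bool" where
  "lax1 b s UL UR \<longleftrightarrow> RH b s UL UR \<and> lam1 b UR < s \<and> s < lam1 b UL \<and> s < vel UR"

definition lax3 :: "real \<Rightarrow> real \<Rightarrow> ext_state \<Rightarrow> ext_state \<Rightarrow> bool" where
  "lax3 b s UL UR \<longleftrightarrow> RH b s UL UR \<and> lam3 b UR < s \<and> s < lam3 b UL \<and> vel UL < s"

definition ext_adm :: "real \<Rightarrow> ext_state \<Rightarrow> bool" where
  "ext_adm b U = (case U of (rho, m, cE, G) \<Rightarrow> admissible b rho m cE)"

definition ext_Psi :: "real \<Rightarrow> real \<Rightarrow> real \<Rightarrow> ext_state \<Rightarrow> real" where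
  "ext_Psi b Smin g U = (case U of (rho, m, cE, G) \<Rightarrow> Psi b Smin g rho m cE)"

end

theory Submission
  imports Defs
begin

lemma entropy_core:
  fixes ga p1 p2 x1 x2 :: real
  assumes ga: "ga > 1" and p1: "p1 > 0" and p2: "p2 > 0" and x2: "0 < x2" and x21: "x2 < x1"
    and H: "p2 * ((ga+1)*x2 - (ga-1)*x1) = p1 * ((ga+1)*x1 - (ga-1)*x2)"
  shows "p1 * x1 powr ga \<le> p2 * x2 powr ga"
proof -
  define r where "r = x2 / x1"
  have x1: "x1 > 0" using x2 x21 by linarith
  have r0: "0 < r" and r1: "r < 1" using x1 x2 x21 by (auto simp: r_def field_simps)
  define A where "A t = (ga+1) - (ga-1)*t" for t :: real
  define B where "B t = (ga+1)*t - (ga-1)" for t :: real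
  have x2r: "x2 = r * x1" using x1 by (simp add: r_def)
  have HAB: "p2 * B r = p1 * A r"
  proof -
    have "x1 * (p2 * B r) = x1 * (p1 * A r)"
      using H unfolding x2r A_def B_def by (simp add: algebra_simps)
    thus ?thesis using x1 by simp
  qed
  have Apos: "A t > 0" if "t \<le> 1" for t
  proof -
    have "(ga-1)*t \<le> (ga-1)*1" using that ga by (intro mult_left_mono) auto
    thus ?thesis unfolding A_def by simp
  qed
  have Br: "B r > 0"
  proof -
    have "p1 * A r > 0" using p1 Apos r1 by simp
    hence "p2 * B r > 0" using HAB by simp
    thus ?thesis using p2 by (simp add: zero_less_mult_iff)
  qed
  have Bpos: "B t > 0" if "r \<le> t" for t
  proof -
    have "(ga+1)*r \<le> (ga+1)*t" using that ga by (intro mult_left_mono) auto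
    thus ?thesis using Br unfolding B_def by simp
  qed
  define h where "h t = ga * ln t + ln (A t) - ln (B t)" for t
  have "h 1 \<le> h r"
  proof (rule DERIV_nonpos_imp_nonincreasing[of r 1 h])
    show "r \<le> 1" using r1 by simp
  next
    fix t assume t: "r \<le> t" "t \<le> 1"
    have tp: "t > 0" using t r0 by simp
    have At: "A t > 0" using Apos t by simp
    have Bt: "B t > 0" using Bpos t by simp
    have D: "DERIV h t :> ga * (1/t) + (- (ga-1)) / A t - (ga+1) / B t"
      unfolding h_def[abs_def] A_def B_def
      using tp At Bt unfolding A_def B_def
      by (auto intro!: derivative_eq_intros simp: field_simps)
    have eq1: "ga * (1/t) + (- (ga-1)) / A t - (ga+1) / B t
        = (ga * A t * B t - (ga-1)*t*B t - (ga+1)*t*A t) / (t * A t * B t)"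
      using tp At Bt by (simp add: field_simps)
    have eq2: "ga * A t * B t - (ga-1)*t*B t - (ga+1)*t*A t = - (ga * (ga*ga-1) * (t-1)^2)"
      unfolding A_def B_def by (simp add: power2_eq_square algebra_simps)
    have "ga*ga - 1 \<ge> 0" using ga mult_mono[of 1 ga 1 ga] by simp
    hence "- (ga * (ga*ga-1) * (t-1)^2) \<le> 0" using ga by simp
    hence "- (ga * (ga*ga-1) * (t-1)^2) / (t * A t * B t) \<le> 0"
      using tp At Bt by (simp add: divide_nonpos_pos)
    hence "ga * (1/t) + (- (ga-1)) / A t - (ga+1) / B t \<le> 0" using eq1 eq2 by simp
    thus "\<exists>y. DERIV h t :> y \<and> y \<le> 0" using D by auto
  qed
  moreover have "h 1 = 0" unfolding h_def A_def B_def by simp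
  ultimately have "0 \<le> ga * ln r + ln (A r) - ln (B r)" unfolding h_def by simp
  moreover have "ln (r powr ga * A r) = ga * ln r + ln (A r)"
    using r0 Apos[of r] r1 by (simp add: ln_mult)
  ultimately have "ln (B r) \<le> ln (r powr ga * A r)" by simp
  hence BA: "B r \<le> r powr ga * A r"
    using Br r0 Apos[of r] r1 by simp
  have "p1 * B r \<le> p1 * (r powr ga * A r)" using BA p1 by simp
  also have "\<dots> = r powr ga * (p2 * B r)" using HAB by simp
  finally have "p1 \<le> r powr ga * p2" using Br by simp
  hence "p1 * x1 powr ga \<le> (r powr ga * p2) * x1 powr ga" by (simp add: mult_right_mono)
  also have "\<dots> = p2 * x2 powr ga" unfolding x2r using r0 x1 by (simp add: powr_mult)
  finally show ?thesis .
qed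


lemma lax1_prim:
  fixes b s g Smin r1 u1 e1 ga1 r2 u2 e2 ga2 :: real
  assumes b: "b \<ge> 0"
    and r1: "r1 > 0" and y1: "1 - b*r1 > 0" and e1: "e1 > 0"
    and r2: "r2 > 0" and y2: "1 - b*r2 > 0" and e2: "e2 > 0"
    and gL: "g \<le> ga1" and g1: "1 \<le> g"
    and Sm: "Smin \<le> e1 / r1 powr g * (1 - b*r1) powr (g - 1)"
    and P1_def: "P1 = (ga1 - 1) / (1 - b*r1) * e1"
    and P2_def: "P2 = (ga2 - 1) / (1 - b*r2) * e2"
    and R1: "s*(r2-r1) = r2*u2 - r1*u1"
    and R2: "s*(r2*u2 - r1*u1) = (r2*u2^2 + P2) - (r1*u1^2 + P1)"
    and R3: "s*((e2 + r2*u2^2/2) - (e1 + r1*u1^2/2)) = u2*((e2 + r2*u2^2/2) + P2) - u1*((e1 + r1*u1^2/2) + P1)"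
    and R4: "s*(r2*ga2 - r1*ga1) = u2*(r2*ga2) - u1*(r1*ga1)"
    and L1: "u2 - sqrt (ga2 * P2 / (r2*(1 - b*r2))) < s"
    and L2: "s < u1 - sqrt (ga1 * P1 / (r1*(1 - b*r1)))"
    and L3: "s < u2"
  shows "e1 - Smin * r1 powr g * (1 - b*r1) powr (1 - g) \<le> e2 - Smin * r2 powr g * (1 - b*r2) powr (1 - g)"
proof -
  define y1 y2 where "y1 = 1 - b*r1" and "y2 = 1 - b*r2"
  have y1p: "y1 > 0" and y2p: "y2 > 0" using y1 y2 by (auto simp: y1_def y2_def)
  define w1 w2 where "w1 = u1 - s" and "w2 = u2 - s"
  define j where "j = r1 * w1"
  have mass: "r2 * w2 = j" unfolding j_def w1_def w2_def using R1 by (simp add: algebra_simps)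
  have w2p: "w2 > 0" using L3 by (simp add: w2_def)
  have jp: "j > 0" using mass w2p r2 by (metis mult_pos_pos)
  have w1p: "w1 > 0" using jp r1 unfolding j_def by (simp add: zero_less_mult_iff)
  have "ga2 * j = ga1 * j"
  proof -
    have "ga2 * (r2 * w2) = ga1 * (r1 * w1)" unfolding w1_def w2_def using R4 by (simp add: algebra_simps)
    thus ?thesis using mass j_def by simp
  qed
  hence gaeq: "ga2 = ga1" using jp by simp
  define ga where "ga = ga1"
  have ga1: "ga \<ge> 1" using gL g1 by (simp add: ga_def)
  have mom: "j * (w2 - w1) = P1 - P2"
    using R2 R1 unfolding j_def w1_def w2_def by algebra
  have hug: "j * (r1*e2 - r2*e1 + (P1+P2)*(r1-r2)/2) = 0"
    using R1 R2 R3 unfolding j_def w1_def w2_def by algebra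
  hence hug': "r1*e2 - r2*e1 + (P1+P2)*(r1-r2)/2 = 0" using jp by simp
  have P1y: "P1 * y1 = (ga-1) * e1" using y1p unfolding P1_def y1_def ga_def by simp
  have P2y: "P2 * y2 = (ga-1) * e2" using y2p unfolding P2_def y2_def ga_def gaeq by simp
  have P1n: "P1 \<ge> 0" using ga1 y1p e1 unfolding P1_def ga_def y1_def by simp
  have P2n: "P2 \<ge> 0" using ga1 y2p e2 unfolding P2_def ga_def y2_def gaeq by simp
  define c1 c2 where "c1 = sqrt (ga * P1 / (r1*y1))" and "c2 = sqrt (ga * P2 / (r2*y2))"
  have c1sq: "c1^2 = ga * P1 / (r1*y1)" unfolding c1_def using ga1 P1n r1 y1p
    by (intro real_sqrt_pow2 divide_nonneg_pos mult_nonneg_nonneg mult_pos_pos) auto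
  have c2sq: "c2^2 = ga * P2 / (r2*y2)" unfolding c2_def using ga1 P2n r2 y2p
    by (intro real_sqrt_pow2 divide_nonneg_pos mult_nonneg_nonneg mult_pos_pos) auto
  have c1n: "c1 \<ge> 0" unfolding c1_def using ga1 P1n r1 y1p
    by (intro real_sqrt_ge_zero divide_nonneg_pos mult_nonneg_nonneg mult_pos_pos) auto
  have wc1: "w1 > c1" using L2 unfolding w1_def c1_def y1_def ga_def by simp
  have wc2: "w2 < c2" using L1 unfolding w2_def c2_def y2_def ga_def gaeq by simp
  have Lx1: "j^2 > r1 * ga * P1 / y1"
  proof -
    have "c1^2 < w1^2" using wc1 c1n by (simp add: power_strict_mono)
    hence "r1^2 * c1^2 < r1^2 * w1^2" using r1 by simp
    moreover have "r1^2 * c1^2 = r1 * ga * P1 / y1" unfolding c1sq using r1 y1p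
      by (simp add: field_simps power2_eq_square)
    ultimately show ?thesis unfolding j_def by (simp add: power_mult_distrib)
  qed
  have Lx2: "j^2 < r2 * ga * P2 / y2"
  proof -
    have "w2^2 < c2^2" using wc2 w2p by (simp add: power_strict_mono)
    hence "r2^2 * w2^2 < r2^2 * c2^2" using r2 by simp
    moreover have "r2^2 * c2^2 = r2 * ga * P2 / y2" unfolding c2sq using r2 y2p
      by (simp add: field_simps power2_eq_square)
    ultimately show ?thesis using mass by (simp add: power_mult_distrib flip: mass)
  qed
  have ga_gt: "ga > 1"
  proof (rule ccontr)
    assume "\<not> ga > 1" hence "ga = 1" using ga1 by simp
    hence "P2 = 0" using P2y y2p by simp
    hence "c2 = 0" unfolding c2_def by simp
    thus False using wc2 w2p by simp
  qed
  have P1p: "P1 > 0" using P1y ga_gt e1 y1p by (metis mult_pos_pos P1n diff_gt_0_iff_gt less_eq_real_def mult_zero_left)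
  have P2p: "P2 > 0" using P2y ga_gt e2 y2p by (metis mult_pos_pos P2n diff_gt_0_iff_gt less_eq_real_def mult_zero_left)
  have comp: "r1 < r2"
  proof (rule ccontr)
    assume "\<not> r1 < r2" hence r21: "r2 \<le> r1" by simp
    have "w1 \<le> w2"
    proof -
      have "j / r1 \<le> j / r2" using r21 r2 jp by (simp add: frac_le)
      moreover have "w1 = j/r1" using j_def r1 by simp
      moreover have "w2 = j/r2" using mass r2 by (auto simp: field_simps)
      ultimately show ?thesis by simp
    qed
    hence "0 \<le> j * (w2 - w1)" using jp by simp
    hence "P2 \<le> P1" using mom by simp
    have y12: "y1 \<le> y2" using r21 b unfolding y1_def y2_def by (simp add: mult_left_mono)
    have "r2 * P2 \<le> r1 * P1" using r21 \<open>P2 \<le> P1\<close> P2n r2 by (intro mult_mono) auto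
    moreover have "0 \<le> r1 * P1" using P1n r1 by simp
    ultimately have "r2 * P2 / y2 \<le> r1 * P1 / y1" using y12 y1p
      by (intro frac_le) auto
    hence "ga * (r2 * P2 / y2) \<le> ga * (r1 * P1 / y1)" using ga1
      by (intro mult_left_mono) auto
    hence "r2 * ga * P2 / y2 \<le> r1 * ga * P1 / y1" by (simp add: algebra_simps)
    thus False using Lx1 Lx2 by simp
  qed
  define x1 x2 where "x1 = 1/r1 - b" and "x2 = 1/r2 - b"
  have x1e: "x1 = y1 / r1" and x2e: "x2 = y2 / r2" using r1 r2 unfolding x1_def x2_def y1_def y2_def
    by (auto simp: field_simps)
  have x2p: "x2 > 0" using x2e y2p r2 by simp
  have x1p: "x1 > 0" using x1e y1p r1 by simp
  have x21: "x2 < x1" unfolding x1_def x2_def using comp r1 by (simp add: frac_less2)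
  have H: "P2 * ((ga+1)*x2 - (ga-1)*x1) = P1 * ((ga+1)*x1 - (ga-1)*x2)"
  proof -
    have "r1 * r2 * (P2 * ((ga+1)*x2 - (ga-1)*x1)) = r1 * r2 * (P1 * ((ga+1)*x1 - (ga-1)*x2))"
    proof -
      have a: "r1*r2*x1 = r2*y1" "r1*r2*x2 = r1*y2" unfolding x1e x2e using r1 r2 by auto
      have "r1 * r2 * (P2 * ((ga+1)*x2 - (ga-1)*x1)) - r1 * r2 * (P1 * ((ga+1)*x1 - (ga-1)*x2))
         = P2*((ga+1)*(r1*r2*x2) - (ga-1)*(r1*r2*x1)) - P1*((ga+1)*(r1*r2*x1) - (ga-1)*(r1*r2*x2))"
        by (simp add: algebra_simps)
      also have "\<dots> = 0" unfolding a using hug' P1y P2y unfolding y1_def y2_def by algebra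
      finally show ?thesis by simp
    qed
    thus ?thesis using r1 r2 by simp
  qed
  have ent: "P1 * x1 powr ga \<le> P2 * x2 powr ga"
    by (rule entropy_core[OF ga_gt P1p P2p x2p x21 H])
  define q1 q2 where "q1 = e1/y1" and "q2 = e2/y2"
  have q1p: "q1 > 0" and q2p: "q2 > 0" using e1 e2 y1p y2p by (auto simp: q1_def q2_def)
  have Pq1: "P1 = (ga-1)*q1" using P1y y1p unfolding q1_def by (simp add: field_simps)
  have Pq2: "P2 = (ga-1)*q2" using P2y y2p unfolding q2_def by (simp add: field_simps)
  have entq: "q1 * x1 powr ga \<le> q2 * x2 powr ga"
  proof -
    have "(ga-1) * (q1 * x1 powr ga) \<le> (ga-1) * (q2 * x2 powr ga)" using ent unfolding Pq1 Pq2 by (simp add: mult.assoc)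
    thus ?thesis using ga_gt by simp
  qed
  define Ph1 Ph2 where "Ph1 = r1 powr g * y1 powr (1-g)" and "Ph2 = r2 powr g * y2 powr (1-g)"
  have Phx: "r powr g * y powr (1-g) = y / (y/r) powr g" if "r > 0" "y > 0" for r y
  proof -
    have a: "y powr (1-g) = y / y powr g" using that by (simp add: powr_diff)
    have b: "(y/r) powr g = y powr g / r powr g" by (simp add: powr_divide)
    have c: "r powr g > 0" "y powr g > 0" using that by auto
    show ?thesis unfolding a b using c by (simp add: field_simps)
  qed
  have Ph1x: "Ph1 = y1 / x1 powr g" unfolding Ph1_def x1e using Phx r1 y1p by simp
  have Ph2x: "Ph2 = y2 / x2 powr g" unfolding Ph2_def x2e using Phx r2 y2p by simp
  have Sm': "Smin \<le> q1 * x1 powr g"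
  proof -
    have "y1 powr (g - 1) = y1 powr g / y1" using y1p by (simp add: powr_diff)
    moreover have "x1 powr g = y1 powr g / r1 powr g" unfolding x1e by (simp add: powr_divide)
    ultimately have "e1 / r1 powr g * y1 powr (g - 1) = q1 * x1 powr g" unfolding q1_def by simp
    thus ?thesis using Sm unfolding y1_def by simp
  qed
  have Phmono: "Ph1 \<le> Ph2"
  proof -
    have a: "r1 powr g \<le> r2 powr g" using comp r1 g1 by (intro powr_mono2) auto
    have y21: "y2 \<le> y1" using comp b unfolding y1_def y2_def by (simp add: mult_left_mono)
    have "y1 powr (1-g) \<le> y2 powr (1-g)" using g1 y2p y21 by (intro powr_mono2') auto
    thus ?thesis unfolding Ph1_def Ph2_def using a by (intro mult_mono) auto
  qed
  have e1eq: "e1 = q1 * x1 powr g * Ph1" unfolding Ph1x q1_def using x1p y1p by simp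
  have e2ge: "q1 * x1 powr g * Ph2 \<le> e2"
  proof -
    have xr: "1 \<le> x1/x2" using x21 x2p by simp
    have "(x1/x2) powr g \<le> (x1/x2) powr ga" using gL xr unfolding ga_def by (intro powr_mono) auto
    hence "x1 powr g / x2 powr g \<le> x1 powr ga / x2 powr ga" by (simp add: powr_divide)
    hence "q1 * (x1 powr g / x2 powr g) \<le> q1 * (x1 powr ga / x2 powr ga)" using q1p by (intro mult_left_mono) auto
    also have "\<dots> \<le> q2" using entq x2p by (simp add: divide_le_eq mult.commute)
    finally have "q1 * x1 powr g / x2 powr g \<le> q2" by simp
    hence "y2 * (q1 * x1 powr g / x2 powr g) \<le> y2 * q2" using y2p by (intro mult_left_mono) auto
    thus ?thesis unfolding Ph2x q2_def using y2p by (simp add: field_simps)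
  qed
  have "Smin * (Ph2 - Ph1) \<le> q1 * x1 powr g * (Ph2 - Ph1)"
    using Sm' Phmono by (intro mult_right_mono) auto
  also have "\<dots> \<le> e2 - e1" using e1eq e2ge by (simp add: algebra_simps)
  finally have "Smin * (Ph2 - Ph1) \<le> e2 - e1" .
  thus ?thesis unfolding Ph1_def Ph2_def y1_def y2_def by (simp add: algebra_simps)
qed


lemma int_en_real: "int_en r (m::real) E = E/r - (m/r)^2/2"
  by (simp add: int_en_def power_divide)

lemma lax1_ext:
  fixes b s g Smin r1 m1 E1 G1 r2 m2 E2 G2 :: real
  assumes b: "b \<ge> 0"
    and a1: "ext_adm b (r1,m1,E1,G1)" and a2: "ext_adm b (r2,m2,E2,G2)"
    and gL: "g \<le> G1/r1" and g1: "1 \<le> g"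
    and Sm: "Smin \<le> S_fun b r1 m1 E1 g"
    and lax: "lax1 b s (r1,m1,E1,G1) (r2,m2,E2,G2)"
  shows "ext_Psi b Smin g (r1,m1,E1,G1) \<le> ext_Psi b Smin g (r2,m2,E2,G2)"
proof -
  have r1: "r1 > 0" and y1: "1 - b*r1 > 0" and i1: "int_en r1 m1 E1 > 0"
    using a1 by (auto simp: ext_adm_def admissible_def)
  have r2: "r2 > 0" and y2: "1 - b*r2 > 0" and i2: "int_en r2 m2 E2 > 0"
    using a2 by (auto simp: ext_adm_def admissible_def)
  define u1 u2 where "u1 = m1/r1" and "u2 = m2/r2"
  define e1 e2 where "e1 = r1 * int_en r1 m1 E1" and "e2 = r2 * int_en r2 m2 E2"
  define ga1 ga2 where "ga1 = G1/r1" and "ga2 = G2/r2"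
  have m1: "m1 = r1*u1" and m2: "m2 = r2*u2" using r1 r2 by (auto simp: u1_def u2_def)
  have E1: "E1 = e1 + r1*u1^2/2" and E2: "E2 = e2 + r2*u2^2/2"
    using r1 r2 by (auto simp: e1_def e2_def u1_def u2_def int_en_real field_simps power2_eq_square)
  have G1: "G1 = r1*ga1" and G2: "G2 = r2*ga2" using r1 r2 by (auto simp: ga1_def ga2_def)
  have e1p: "e1 > 0" and e2p: "e2 > 0" using r1 r2 i1 i2 by (auto simp: e1_def e2_def)
  define P1 P2 where "P1 = (ga1 - 1) / (1 - b*r1) * e1" and "P2 = (ga2 - 1) / (1 - b*r2) * e2"
  have pc1: "p_cov b (r1,m1,E1,G1) = P1" unfolding P1_def p_cov_def m1 E1 G1 using r1
    by (simp add: power2_eq_square)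
  have pc2: "p_cov b (r2,m2,E2,G2) = P2" unfolding P2_def p_cov_def m2 E2 G2 using r2
    by (simp add: power2_eq_square)
  have lx: "s*(r2-r1) = m2 - m1 \<and> s*(m2-m1) = (m2^2/r2 + P2) - (m1^2/r1 + P1)
     \<and> s*(E2-E1) = m2/r2*(E2+P2) - m1/r1*(E1+P1) \<and> s*(G2-G1) = m2/r2*G2 - m1/r1*G1
     \<and> m2/r2 - sqrt(G2/r2 * P2/(r2*(1-b*r2))) < s \<and> s < m1/r1 - sqrt(G1/r1*P1/(r1*(1-b*r1)))
     \<and> s < m2/r2"
    using lax unfolding lax1_def RH_def ext_flux_def lam1_def vel_def snd_speed_def
    by (simp add: pc1 pc2)
  have R1: "s*(r2-r1) = r2*u2 - r1*u1" using lx m1 m2 by simp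
  have R2: "s*(r2*u2 - r1*u1) = (r2*u2^2 + P2) - (r1*u1^2 + P1)"
    using lx r1 r2 unfolding m1 m2 by (simp add: power2_eq_square)
  have R3: "s*((e2 + r2*u2^2/2) - (e1 + r1*u1^2/2)) = u2*((e2 + r2*u2^2/2) + P2) - u1*((e1 + r1*u1^2/2) + P1)"
    using lx r1 r2 unfolding m1 m2 E1 E2 by simp
  have R4: "s*(r2*ga2 - r1*ga1) = u2*(r2*ga2) - u1*(r1*ga1)"
    using lx r1 r2 unfolding m1 m2 G1 G2 by simp
  have L1: "u2 - sqrt (ga2 * P2 / (r2*(1 - b*r2))) < s"
    using lx r1 r2 unfolding u2_def ga2_def by (simp add: mult.assoc)
  have L2: "s < u1 - sqrt (ga1 * P1 / (r1*(1 - b*r1)))"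
    using lx r1 r2 unfolding u1_def ga1_def by (simp add: mult.assoc)
  have L3: "s < u2" using lx unfolding u2_def by simp
  have Sm': "Smin \<le> e1 / r1 powr g * (1 - b*r1) powr (g - 1)"
    using Sm unfolding S_fun_def e1_def by simp
  have "e1 - Smin * r1 powr g * (1 - b*r1) powr (1 - g) \<le> e2 - Smin * r2 powr g * (1 - b*r2) powr (1 - g)"
    by (rule lax1_prim[OF b r1 y1 e1p r2 y2 e2p _ g1 Sm' P1_def P2_def R1 R2 R3 R4 L1 L2 L3])
      (use gL in \<open>simp add: ga1_def\<close>)
  thus ?thesis unfolding ext_Psi_def Psi_def e1_def e2_def by simp
qed

lemma lax3_ext:
  fixes b s g Smin r1 m1 E1 G1 r2 m2 E2 G2 :: real
  assumes b: "b \<ge> 0"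
    and a1: "ext_adm b (r1,m1,E1,G1)" and a2: "ext_adm b (r2,m2,E2,G2)"
    and gL: "g \<le> G1/r1" and g1: "1 \<le> g"
    and Sm: "Smin \<le> S_fun b r1 m1 E1 g"
    and lax: "lax3 b s (r2,m2,E2,G2) (r1,m1,E1,G1)"
  shows "ext_Psi b Smin g (r1,m1,E1,G1) \<le> ext_Psi b Smin g (r2,m2,E2,G2)"
proof -
  have ie: "int_en r (-m) E = int_en r m E" for r m E :: real by (simp add: int_en_real power2_eq_square)
  have a1': "ext_adm b (r1,-m1,E1,G1)" using a1 by (simp add: ext_adm_def admissible_def ie)
  have a2': "ext_adm b (r2,-m2,E2,G2)" using a2 by (simp add: ext_adm_def admissible_def ie)
  have Sm': "Smin \<le> S_fun b r1 (-m1) E1 g" using Sm by (simp add: S_fun_def ie)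
  have lax': "lax1 b (-s) (r1,-m1,E1,G1) (r2,-m2,E2,G2)"
  proof -
    have pc: "p_cov b (r,-m,E,G) = p_cov b (r,m,E,G)" for r m E G by (simp add: p_cov_def)
    define P1 P2 where "P1 = p_cov b (r1,m1,E1,G1)" and "P2 = p_cov b (r2,m2,E2,G2)"
    have l: "s*(r1-r2) = m1 - m2 \<and> s*(m1-m2) = (m1^2/r1 + P1) - (m2^2/r2 + P2)
      \<and> s*(E1-E2) = m1/r1*(E1+P1) - m2/r2*(E2+P2) \<and> s*(G1-G2) = m1/r1*G1 - m2/r2*G2
      \<and> m1/r1 + sqrt(G1/r1 * P1/(r1*(1-b*r1))) < s \<and> s < m2/r2 + sqrt(G2/r2*P2/(r2*(1-b*r2)))
      \<and> m2/r2 < s"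
      using lax unfolding lax3_def RH_def ext_flux_def lam3_def vel_def snd_speed_def P1_def P2_def
      by simp
    show ?thesis unfolding lax1_def RH_def ext_flux_def lam1_def vel_def snd_speed_def pc
      unfolding P1_def[symmetric] P2_def[symmetric] using l
      by (simp add: algebra_simps add_divide_distrib diff_divide_distrib)
  qed
  have "ext_Psi b Smin g (r1,-m1,E1,G1) \<le> ext_Psi b Smin g (r2,-m2,E2,G2)"
    by (rule lax1_ext[OF b a1' a2' gL g1 Sm' lax'])
  thus ?thesis by (simp add: ext_Psi_def Psi_def ie)
qed

lemma unit_dir_cases: "unit_dir c = 0 \<or> norm (unit_dir c) = 1"
  by (cases "c = 0") (auto simp: unit_dir_def)

lemma int_en_normal:
  fixes M c :: "real^'d"
  assumes r: "r > 0"
  shows "int_en r (M \<bullet> unit_dir c) (E_normal (unit_dir c) r M E) = int_en r M E"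
proof -
  define n where "n = unit_dir c"
  have nn: "(M \<bullet> n)^2 * (norm n)^2 = (M \<bullet> n)^2"
    using unit_dir_cases[of c] unfolding n_def[symmetric] by auto
  define a where "a = M \<bullet> n"
  have "(norm (M - a *\<^sub>R n))^2 = (M - a *\<^sub>R n) \<bullet> (M - a *\<^sub>R n)"
    by (simp add: power2_norm_eq_inner)
  also have "\<dots> = M \<bullet> M - 2*a*(M \<bullet> n) + a*a*(n \<bullet> n)"
    by (simp add: inner_diff_left inner_diff_right inner_commute algebra_simps)
  also have "\<dots> = (norm M)^2 - 2 * (M \<bullet> n)^2 + (M \<bullet> n)^2 * (norm n)^2"
    by (simp add: a_def power2_norm_eq_inner[symmetric]) (simp add: power2_eq_square)
  finally have "(norm (M - (M \<bullet> n) *\<^sub>R n))^2 = (norm M)^2 - 2 * (M \<bullet> n)^2 + (M \<bullet> n)^2 * (norm n)^2"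
    by (simp add: a_def)
  hence K: "(norm (M - (M \<bullet> n) *\<^sub>R n))^2 = (norm M)^2 - (M \<bullet> n)^2" using nn by simp
  have "int_en r M E = E/r - (norm M)^2 / (2*r^2)"
    using r by (simp add: int_en_def power_divide power_mult_distrib)
  moreover have "int_en r (M \<bullet> n) (E_normal n r M E) = (E - ((norm M)^2 - (M \<bullet> n)^2)/(2*r))/r - ((M \<bullet> n)/r)^2/2"
    by (simp add: int_en_real E_normal_def K)
  moreover have "(E - ((norm M)^2 - (M \<bullet> n)^2)/(2*r))/r - ((M \<bullet> n)/r)^2/2 = E/r - (norm M)^2 / (2*r^2)"
    using r by (simp add: field_simps power2_eq_square)
  ultimately show ?thesis unfolding n_def[symmetric] by simp
qed

theorem lemma4p1:
  fixes b :: real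
    and p :: "real \<Rightarrow> real^'d \<Rightarrow> real \<Rightarrow> real"
    and V :: "'v set" and I :: "'v \<Rightarrow> 'v set"
    and c :: "'v \<Rightarrow> 'v \<Rightarrow> real^'d"
    and rho :: "'v \<Rightarrow> real" and M :: "'v \<Rightarrow> real^'d" and E :: "'v \<Rightarrow> real"
    and i j :: 'v and g :: real
  assumes b_nonneg: "b \<ge> 0"
    and p_nonneg: "\<And>r m en. admissible b r m en \<Longrightarrow> p r m en \<ge> 0"
    and V_fin: "finite V"
    and I_sub: "\<And>k. k \<in> V \<Longrightarrow> I k \<subseteq> V \<and> k \<in> I k"
    and c_nz: "\<And>k l. k \<in> V \<Longrightarrow> l \<in> I k \<Longrightarrow> l \<noteq> k \<Longrightarrow> c k l \<noteq> 0"
    and U_adm: "\<And>k. k \<in> V \<Longrightarrow> admissible b (rho k) (M k) (E k)"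
    and i_in: "i \<in> V" and j_in: "j \<in> I i"
    and g_ge: "1 \<le> g"
    and g_le: "g \<le> min (gamma_of b (p (rho i) (M i) (E i)) (rho i) (M i) (E i))
                        (gamma_of b (p (rho j) (M j) (E j)) (rho j) (M j) (E j))"
  shows
    "let n = unit_dir (c i j);
         Smin = min (S_fun b (rho i) (M i) (E i) g) (S_fun b (rho j) (M j) (E j) g);
         UL = (rho i, M i \<bullet> n, E_normal n (rho i) (M i) (E i),
               rho i * gamma_of b (p (rho i) (M i) (E i)) (rho i) (M i) (E i));
         UR = (rho j, M j \<bullet> n, E_normal n (rho j) (M j) (E j),
               rho j * gamma_of b (p (rho j) (M j) (E j)) (rho j) (M j) (E j))
     in (\<forall>s Ustar. ext_adm b Ustar \<and> lax1 b s UL Ustar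
            \<longrightarrow> ext_Psi b Smin g UL \<le> ext_Psi b Smin g Ustar)
      \<and> (\<forall>s Ustar. ext_adm b Ustar \<and> lax3 b s Ustar UR
            \<longrightarrow> ext_Psi b Smin g UR \<le> ext_Psi b Smin g Ustar)"
proof -
  have jV: "j \<in> V" using I_sub[OF i_in] j_in by auto
  have ai: "admissible b (rho i) (M i) (E i)" and aj: "admissible b (rho j) (M j) (E j)"
    using U_adm i_in jV by auto
  have ri: "rho i > 0" and rj: "rho j > 0" using ai aj by (auto simp: admissible_def)
  define n where "n = unit_dir (c i j)"
  define Smin where "Smin = min (S_fun b (rho i) (M i) (E i) g) (S_fun b (rho j) (M j) (E j) g)"
  define UL where "UL = (rho i, M i \<bullet> n, E_normal n (rho i) (M i) (E i),
               rho i * gamma_of b (p (rho i) (M i) (E i)) (rho i) (M i) (E i))"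
  define UR where "UR = (rho j, M j \<bullet> n, E_normal n (rho j) (M j) (E j),
               rho j * gamma_of b (p (rho j) (M j) (E j)) (rho j) (M j) (E j))"
  have iei: "int_en (rho i) (M i \<bullet> n) (E_normal n (rho i) (M i) (E i)) = int_en (rho i) (M i) (E i)"
    unfolding n_def by (rule int_en_normal[OF ri])
  have iej: "int_en (rho j) (M j \<bullet> n) (E_normal n (rho j) (M j) (E j)) = int_en (rho j) (M j) (E j)"
    unfolding n_def by (rule int_en_normal[OF rj])
  have admL: "ext_adm b UL" using ai unfolding UL_def ext_adm_def admissible_def by (simp add: iei)
  have admR: "ext_adm b UR" using aj unfolding UR_def ext_adm_def admissible_def by (simp add: iej)
  have gLi: "g \<le> (rho i * gamma_of b (p (rho i) (M i) (E i)) (rho i) (M i) (E i)) / rho i"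
    using g_le ri by simp
  have gLj: "g \<le> (rho j * gamma_of b (p (rho j) (M j) (E j)) (rho j) (M j) (E j)) / rho j"
    using g_le rj by simp
  have Smi: "Smin \<le> S_fun b (rho i) (M i \<bullet> n) (E_normal n (rho i) (M i) (E i)) g"
    unfolding Smin_def S_fun_def iei by simp
  have Smj: "Smin \<le> S_fun b (rho j) (M j \<bullet> n) (E_normal n (rho j) (M j) (E j)) g"
    unfolding Smin_def S_fun_def iej by simp
  have A: "\<forall>s Ustar. ext_adm b Ustar \<and> lax1 b s UL Ustar \<longrightarrow> ext_Psi b Smin g UL \<le> ext_Psi b Smin g Ustar"
  proof (intro allI impI)
    fix s Ustar assume h: "ext_adm b Ustar \<and> lax1 b s UL Ustar"
    obtain r2 m2 E2 G2 where U: "Ustar = (r2,m2,E2,G2)" by (cases Ustar) auto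
    show "ext_Psi b Smin g UL \<le> ext_Psi b Smin g Ustar"
      using lax1_ext[OF b_nonneg admL[unfolded UL_def] h[unfolded U UL_def, THEN conjunct1] gLi g_ge Smi
          h[unfolded U UL_def, THEN conjunct2]]
      unfolding U UL_def .
  qed
  have B: "\<forall>s Ustar. ext_adm b Ustar \<and> lax3 b s Ustar UR \<longrightarrow> ext_Psi b Smin g UR \<le> ext_Psi b Smin g Ustar"
  proof (intro allI impI)
    fix s Ustar assume h: "ext_adm b Ustar \<and> lax3 b s Ustar UR"
    obtain r2 m2 E2 G2 where U: "Ustar = (r2,m2,E2,G2)" by (cases Ustar) auto
    show "ext_Psi b Smin g UR \<le> ext_Psi b Smin g Ustar"
      using lax3_ext[OF b_nonneg admR[unfolded UR_def] h[unfolded U UR_def, THEN conjunct1] gLj g_ge Smj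
          h[unfolded U UR_def, THEN conjunct2]]
      unfolding U UR_def .
  qed
  show ?thesis unfolding Let_def using A B unfolding n_def Smin_def UL_def UR_def by blast
qed

end
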